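(* For every trie $\mathcal T$ with $n$ nodes over an alphabet of size $\sigma$ and every integer $k\ge0$, the number $r$ of XBWT runs of $\mathcal T$ satisfies $r\le n\mathcal H_k(\mathcal T)+\sigma^{k+1}$.
   Context: A trie over a finite totally ordered alphabet $\Sigma$ is a rooted ordered tree with edges labeled by symbols of $\Sigma$ such that edges leaving the same node have distinct labels and siblings are ordered by their incoming labels. For node $u$: $out(u)$ is the set of labels of edges leaving $u$; $\lambda(u)$ is the label of the edge entering $u$, with $\lambda(\text{root})=\#\notin\Sigma$; $\pi(u)$ the parent, $\pi(\text{root})=\text{root}$; $\lambda_0(u)=\epsilon$, $\lambda_k(u)=\lambda_{k-1}(\pi(u))\cdot\lambda(u)$; $n_w=|\{u:\lambda_k(u)=w\}|$, $n_{w,c}=|\{u:\lambda_k(u)=w,\ c\in out(u)\}|$. Logs base 2, $0\log(x/0)=0$. $\mathcal H_k(\mathcal T)=\sum_{w}\sum_{c\in\Sigma}\left[\frac{n_{w,c}}{n}\log\frac{n_w}{n_{w,c}}+\frac{n_w-n_{w,c}}{n}\log\frac{n_w}{n_w-n_{w,c}}\right]$ over contexts $w$ with $n_w>0$. Let $u_1,\dots,u_n$ be the nodes sorted co-lexicographically (right-to-left comparison, $\epsilon$ smallest) by the root-to-node path label. An index $i\in[n]$ is a $c$-run break if $c\in out(u_i)$ and either $i=n$ or $c\notin out(u_{i+1})$; $r=\sum_{c\in\Sigma}r_c$ where $r_c$ is the number of $c$-run breaks. *)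

theory Defs
  imports Complex_Main "HOL-Library.List_Lexorder"
begin

text \<open>A trie over the alphabet Sig is represented by the (finite, prefix-closed) set of its
  root-to-node path labels; each node is identified with its path label, the root with [].\<close>

definition is_trie :: "'a set \<Rightarrow> 'a list set \<Rightarrow> bool" where
  "is_trie Sig T \<longleftrightarrow> finite T \<and> [] \<in> T \<and> (\<forall>s\<in>T. set s \<subseteq> Sig)
     \<and> (\<forall>s c. s @ [c] \<in> T \<longrightarrow> s \<in> T)"

definition out :: "'a list set \<Rightarrow> 'a list \<Rightarrow> 'a set" where
  "out T u = {c. u @ [c] \<in> T}"

text \<open>lambda(u): label of the incoming edge; None plays the role of the symbol # (root).\<close>
definition lam :: "'a list \<Rightarrow> 'a option" where
  "lam u = (if u = [] then None else Some (last u))"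

text \<open>pi(u): parent; butlast [] = [] so pi(root) = root.\<close>
definition par :: "'a list \<Rightarrow> 'a list" where
  "par u = butlast u"

fun lamk :: "nat \<Rightarrow> 'a list \<Rightarrow> 'a option list" where
  "lamk 0 u = []"
| "lamk (Suc k) u = lamk k (par u) @ [lam u]"

definition n_w :: "nat \<Rightarrow> 'a list set \<Rightarrow> 'a option list \<Rightarrow> nat" where
  "n_w k T w = card {u \<in> T. lamk k u = w}"

definition n_wc :: "nat \<Rightarrow> 'a list set \<Rightarrow> 'a option list \<Rightarrow> 'a \<Rightarrow> nat" where
  "n_wc k T w c = card {u \<in> T. lamk k u = w \<and> c \<in> out T u}"

text \<open>k-th order empirical entropy; contexts w with n_w > 0 are exactly lamk k ` T.
  (Terms with a zero numerator vanish since 0 * _ = 0, matching 0 log(x/0) = 0.)\<close>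
definition Hk :: "'a set \<Rightarrow> nat \<Rightarrow> 'a list set \<Rightarrow> real" where
  "Hk Sig k T = (let n = real (card T) in
     (\<Sum>w\<in>lamk k ` T. \<Sum>c\<in>Sig.
        real (n_wc k T w c) / n * log 2 (real (n_w k T w) / real (n_wc k T w c))
      + real (n_w k T w - n_wc k T w c) / n
          * log 2 (real (n_w k T w) / real (n_w k T w - n_wc k T w c))))"

text \<open>Nodes sorted co-lexicographically: sort the reversed path labels lexicographically
  (List_Lexorder: a proper prefix is smaller, so epsilon is smallest), then reverse back.\<close>
definition colex_nodes :: "('a::linorder) list set \<Rightarrow> 'a list list" where
  "colex_nodes T = map rev (sorted_list_of_set (rev ` T))"

text \<open>Number of XBWT runs r = sum over c of the number of c-run breaks (0-based indices).\<close>
definition xbwt_runs :: "('a::linorder) set \<Rightarrow> 'a list set \<Rightarrow> nat" where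
  "xbwt_runs Sig T = (let us = colex_nodes T; n = card T in
     \<Sum>c\<in>Sig. card {i. i < n \<and> c \<in> out T (us ! i)
                      \<and> (i = n - 1 \<or> c \<notin> out T (us ! Suc i))})"

end

theory Submission
  imports Defs
begin

lemma take_mono_lex:
  fixes xs ys :: "('a::linorder) list"
  shows "xs \<le> ys \<Longrightarrow> take k xs \<le> take k ys"
proof (induction k arbitrary: xs ys)
  case 0 then show ?case by simp
next
  case (Suc k)
  show ?case
  proof (cases xs)
    case Nil then show ?thesis by simp
  next
    case (Cons x xs')
    then obtain y ys' where ys: "ys = y # ys'" using Suc.prems by (cases ys) auto
    show ?thesis using Suc Cons ys by auto
  qed
qed

lemma lamk_eq: "lamk k u = replicate (k - length u) None @ map Some (drop (length u - k) u)"
proof (induction k arbitrary: u)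
  case 0 then show ?case by simp
next
  case (Suc k)
  show ?case
  proof (cases u rule: rev_cases)
    case Nil
    then show ?thesis using Suc by (simp add: lam_def par_def replicate_append_same)
  next
    case (snoc u' x)
    have "length u' - k \<le> length u'" by simp
    then show ?thesis using Suc snoc by (simp add: lam_def par_def)
  qed
qed

definition gctx :: "nat \<Rightarrow> 'a list \<Rightarrow> 'a option list" where
  "gctx k p = replicate (k - length p) None @ map Some (rev p)"

lemma lamk_gctx: "lamk k u = gctx k (take k (rev u))"
  unfolding lamk_eq gctx_def by (simp add: take_rev rev_map)

lemma gctx_inj: "gctx k p = gctx k q \<Longrightarrow> p = q"
proof -
  assume "gctx k p = gctx k q"
  then have "filter (\<lambda>x. x \<noteq> None) (gctx k p) = filter (\<lambda>x. x \<noteq> None) (gctx k q)" by simp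
  then have "map Some (rev p) = map Some (rev q)"
    unfolding gctx_def by (simp add: filter_replicate comp_def)
  then show "p = q" by (simp add: inj_map_eq_map)
qed

lemma lamk_eq_iff: "lamk k u = lamk k v \<longleftrightarrow> take k (rev u) = take k (rev v)"
  using gctx_inj lamk_gctx by metis

lemma colex_facts:
  assumes "finite T"
  shows "length (colex_nodes T) = card T" "distinct (colex_nodes T)"
    "set (colex_nodes T) = T" "sorted (map rev (colex_nodes T))"
proof -
  have inj: "inj_on rev T" by (simp add: inj_on_def)
  show "length (colex_nodes T) = card T"
    unfolding colex_nodes_def using assms inj by (simp add: card_image)
  show "distinct (colex_nodes T)"
    unfolding colex_nodes_def using assms by (simp add: distinct_map inj_on_def)
  show "set (colex_nodes T) = T"
    unfolding colex_nodes_def using assms by (simp add: image_image)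
  show "sorted (map rev (colex_nodes T))"
    unfolding colex_nodes_def by (simp add: comp_def)
qed

lemma contig:
  assumes "finite T" "i \<le> j" "j \<le> l" "l < card T"
    and "lamk k (colex_nodes T ! i) = lamk k (colex_nodes T ! l)"
  shows "lamk k (colex_nodes T ! j) = lamk k (colex_nodes T ! i)"
proof -
  let ?xs = "map rev (colex_nodes T)"
  have s: "sorted ?xs" and len: "length ?xs = card T" using colex_facts[OF assms(1)] by auto
  have "?xs ! i \<le> ?xs ! j" by (rule sorted_nth_mono[OF s]) (use assms len in auto)
  moreover have "?xs ! j \<le> ?xs ! l" by (rule sorted_nth_mono[OF s]) (use assms len in auto)
  ultimately have 1: "take k (?xs ! i) \<le> take k (?xs ! j)" "take k (?xs ! j) \<le> take k (?xs ! l)"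
    using take_mono_lex by blast+
  have e: "take k (?xs ! i) = take k (?xs ! l)" using assms(5) lamk_eq_iff assms len
    by (metis le_less_trans length_map nth_map assms(2,3))
  have "take k (?xs ! j) = take k (?xs ! i)" using 1 e by (metis order_antisym)
  then show ?thesis using lamk_eq_iff assms len
    by (metis le_less_trans length_map nth_map)
qed


definition "cx k T i = lamk k (colex_nodes T ! i)"
definition "bb T c i \<longleftrightarrow> c \<in> out T (colex_nodes T ! i)"
definition "brk T c i \<longleftrightarrow> i < card T \<and> bb T c i \<and> (i = card T - 1 \<or> \<not> bb T c (Suc i))"
definition "blk k T w = {i. i < card T \<and> cx k T i = w}"
definition "cnt k T c = {w \<in> lamk k ` T. (\<forall>i\<in>blk k T w. bb T c i) \<and>
   (\<exists>i\<in>blk k T w. brk T c i \<and> (Suc i = card T \<or> cx k T (Suc i) \<noteq> w))}"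
definition "trm k T w c = real (n_wc k T w c) * log 2 (real (n_w k T w) / real (n_wc k T w c))
   + real (n_w k T w - n_wc k T w c) * log 2 (real (n_w k T w) / real (n_w k T w - n_wc k T w c))"

lemma runs_eq: "xbwt_runs Sig T = (\<Sum>c\<in>Sig. card {i. brk T c i})"
  unfolding xbwt_runs_def Let_def brk_def bb_def by simp

lemma cx_in: "finite T \<Longrightarrow> i < card T \<Longrightarrow> cx k T i \<in> lamk k ` T"
  unfolding cx_def using colex_facts[of T] by (metis image_eqI nth_mem)

lemma contig':
  assumes "finite T" "i \<le> j" "j \<le> l" "l < card T" "cx k T i = cx k T l"
  shows "cx k T j = cx k T i"
  using contig[OF assms(1-4)] assms(5) unfolding cx_def by blast

lemma card_blk_img:
  assumes "finite T"
  shows "card {u \<in> T. P u} = card {i. i < card T \<and> P (colex_nodes T ! i)}"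
proof -
  let ?us = "colex_nodes T"
  have L: "length ?us = card T" and S: "set ?us = T" using colex_facts[OF assms] by auto
  have "{u \<in> T. P u} = (\<lambda>i. ?us ! i) ` {i. i < card T \<and> P (?us ! i)}"
  proof (intro set_eqI iffI)
    fix x assume "x \<in> {u \<in> T. P u}"
    then have "x \<in> set ?us" "P x" using S by auto
    then obtain i where "i < length ?us" "?us ! i = x" "P x" by (auto simp: in_set_conv_nth)
    then show "x \<in> (\<lambda>i. ?us ! i) ` {i. i < card T \<and> P (?us ! i)}" using L by force
  next
    fix x assume "x \<in> (\<lambda>i. ?us ! i) ` {i. i < card T \<and> P (?us ! i)}"
    then obtain i where "i < card T" "P (?us ! i)" "x = ?us ! i" by auto
    then show "x \<in> {u \<in> T. P u}" using L S nth_mem by fastforce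
  qed
  moreover have "inj_on (\<lambda>i. ?us ! i) {i. i < card T \<and> P (?us ! i)}"
    using colex_facts[OF assms] by (auto simp: inj_on_def nth_eq_iff_index_eq)
  ultimately show ?thesis by (simp add: card_image)
qed

lemma nw_eq: "finite T \<Longrightarrow> n_w k T w = card (blk k T w)"
  unfolding n_w_def blk_def cx_def by (rule card_blk_img)

lemma nwc_eq: "finite T \<Longrightarrow> n_wc k T w c = card {i \<in> blk k T w. bb T c i}"
  unfolding n_wc_def blk_def cx_def bb_def
  by (subst card_blk_img) (auto intro: arg_cong[where f=card])

lemma brk_split:
  assumes "finite T"
  shows "card {i. brk T c i} = (\<Sum>w\<in>lamk k ` T. card {i \<in> blk k T w. brk T c i})"
proof -
  have fin: "finite {i. brk T c i}" by (rule finite_subset[of _ "{..<card T}"]) (auto simp: brk_def)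
  have "(\<Sum>w\<in>lamk k ` T. card {i \<in> blk k T w. brk T c i})
      = (\<Sum>w\<in>lamk k ` T. \<Sum>i\<in>{i \<in> {i. brk T c i}. cx k T i = w}. 1)"
    by (intro sum.cong refl) (auto simp: blk_def brk_def intro: arg_cong[where f=card])
  also have "\<dots> = (\<Sum>i\<in>{i. brk T c i}. 1)"
    by (rule sum.group[OF fin]) (use assms in \<open>auto simp: brk_def intro: cx_in\<close>)
  finally show ?thesis by simp
qed


lemma log_ge1: "(x::real) \<ge> 2 \<Longrightarrow> log 2 x \<ge> 1"
  by (simp add: le_log_iff)

lemma ent_ineq:
  fixes a z :: nat
  assumes "a \<ge> 1" "z \<ge> 1"
  shows "real (min a (z+1)) \<le> real a * log 2 (real (a+z) / real a) + real z * log 2 (real (a+z) / real z)"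
proof (cases "a \<le> z")
  case True
  have "real (a+z) / real a \<ge> 2" using True assms by (simp add: field_simps)
  then have "real a * log 2 (real (a+z) / real a) \<ge> real a" using log_ge1[of "real (a+z) / real a"]
    using assms by simp
  moreover have "real z * log 2 (real (a+z) / real z) \<ge> 0" using assms by simp
  moreover have "real (min a (z+1)) \<le> real a" by simp
  ultimately show ?thesis by linarith
next
  case False
  have "real (a+z) / real z \<ge> 2" using False assms by (simp add: field_simps)
  then have 1: "real z * log 2 (real (a+z) / real z) \<ge> real z" using log_ge1[of "real (a+z) / real z"]
    using assms by simp
  have "(1 + real z / real a) ^ a \<ge> 1 + real a * (real z / real a)"
    by (rule Bernoulli_inequality) (use assms in \<open>simp add: order.trans[OF _ divide_nonneg_nonneg]\<close>)
  also have "1 + real a * (real z / real a) = 1 + real z" using assms by simp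
  finally have "(1 + real z / real a) ^ a \<ge> 2" using assms by simp
  moreover have "real (a+z) / real a = 1 + real z / real a" using assms by (simp add: field_simps)
  ultimately have "(real (a+z) / real a) ^ a \<ge> 2" by simp
  then have "log 2 ((real (a+z) / real a) ^ a) \<ge> 1" by (rule log_ge1)
  then have 2: "real a * log 2 (real (a+z) / real a) \<ge> 1"
    using assms by (simp add: log_nat_power)
  have "real (min a (z+1)) \<le> real z + 1" by simp
  then show ?thesis using 1 2 by linarith
qed

lemma trm_nonneg:
  assumes "n_wc k T w c \<le> n_w k T w"
  shows "trm k T w c \<ge> 0"
proof -
  have "real (n_wc k T w c) * log 2 (real (n_w k T w) / real (n_wc k T w c)) \<ge> 0"
    using assms by (cases "n_wc k T w c = 0") auto
  moreover have "real (n_w k T w - n_wc k T w c) * log 2 (real (n_w k T w) / real (n_w k T w - n_wc k T w c)) \<ge> 0"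
    using assms by (cases "n_w k T w - n_wc k T w c = 0") auto
  ultimately show ?thesis unfolding trm_def by simp
qed


lemma block_bound:
  assumes fin: "finite T" and wW: "w \<in> lamk k ` T"
  shows "real (card {i \<in> blk k T w. brk T c i}) \<le> trm k T w c + (if w \<in> cnt k T c then 1 else 0)"
proof -
  define n where "n = card T"
  define B where "B = blk k T w"
  define Os where "Os = {i \<in> B. bb T c i}"
  define Z where "Z = {i \<in> B. \<not> bb T c i}"
  define Bk where "Bk = {i \<in> B. brk T c i}"
  define Ext where "Ext = {i \<in> Bk. Suc i = n \<or> cx k T (Suc i) \<noteq> w}"
  define In where "In = Bk - Ext"
  have finB: "finite B" unfolding B_def blk_def by simp
  have BO: "B = Os \<union> Z" "Os \<inter> Z = {}" unfolding Os_def Z_def by auto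
  have cardB: "card B = card Os + card Z" using BO finB by (metis card_Un_disjoint finite_Un)
  have nw: "n_w k T w = card B" unfolding B_def using nw_eq[OF fin] .
  have nwc: "n_wc k T w c = card Os" unfolding Os_def B_def using nwc_eq[OF fin] .
  have BkO: "Bk \<subseteq> Os" unfolding Bk_def Os_def brk_def by auto
  have finBk: "finite Bk" using finB unfolding Bk_def by simp
  have c1: "card Bk \<le> card Os" using BkO finB unfolding Os_def by (simp add: card_mono)
  have ext1: "card Ext \<le> 1"
  proof -
    have "\<forall>i\<in>Ext. \<forall>j\<in>Ext. i = j"
    proof (intro ballI, rule ccontr)
      fix i j assume ij: "i \<in> Ext" "j \<in> Ext" "i \<noteq> j"
      have key: "False" if a: "i' \<in> Ext" "j' \<in> Ext" "i' < j'" for i' j'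
      proof -
        have j': "j' < n" "cx k T j' = w" "cx k T i' = w"
          using a unfolding Ext_def Bk_def B_def blk_def n_def by auto
        have "cx k T (Suc i') = cx k T i'"
          by (rule contig'[OF fin]) (use a j' n_def in auto)
        moreover have "Suc i' \<noteq> n" using a j' by auto
        ultimately show False using a(1) j' unfolding Ext_def by auto
      qed
      show False using ij key by (metis linorder_neqE_nat)
    qed
    moreover have "finite Ext" using finBk unfolding Ext_def by simp
    ultimately show ?thesis by (simp add: card_le_Suc0_iff_eq)
  qed
  have inZ: "Suc ` In \<subseteq> Z"
  proof
    fix x assume "x \<in> Suc ` In"
    then obtain i where i: "i \<in> In" "x = Suc i" by auto
    then have "i \<in> Bk" "Suc i \<noteq> n" "cx k T (Suc i) = w" unfolding In_def Ext_def by auto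
    moreover then have "i < n" "brk T c i" unfolding Bk_def B_def blk_def n_def by auto
    ultimately show "x \<in> Z" unfolding Z_def B_def blk_def brk_def n_def using i by auto
  qed
  have c2: "card In \<le> card Z"
  proof -
    have "card (Suc ` In) \<le> card Z"
      by (rule card_mono) (use finB inZ Z_def in auto)
    then show ?thesis by (simp add: card_image)
  qed
  have BkE: "card Bk = card In + card Ext"
  proof -
    have "Ext \<subseteq> Bk" unfolding Ext_def by auto
    then have "card In = card Bk - card Ext" unfolding In_def using finBk by (simp add: card_Diff_subset finite_subset)
    moreover have "card Ext \<le> card Bk" using \<open>Ext \<subseteq> Bk\<close> finBk by (simp add: card_mono)
    ultimately show ?thesis by simp
  qed
  have lhs: "card {i \<in> blk k T w. brk T c i} = card Bk" unfolding Bk_def B_def ..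
  have nwz: "n_w k T w - n_wc k T w c = card Z" using nw nwc cardB by simp
  show ?thesis
  proof (cases "card Z = 0")
    case True
    have t0: "trm k T w c = 0" unfolding trm_def using nwz nw nwc cardB True by simp
    have In0: "card In = 0" using c2 True by simp
    show ?thesis
    proof (cases "Ext = {}")
      case True then show ?thesis using lhs BkE In0 t0 by simp
    next
      case False
      then obtain i where i: "i \<in> Ext" by auto
      have Z0: "Z = {}" using True finB Z_def by simp
      have a1: "\<forall>j\<in>blk k T w. bb T c j" using Z0 unfolding Z_def B_def by auto
      have a2: "brk T c i \<and> (Suc i = card T \<or> cx k T (Suc i) \<noteq> w)"
          using i unfolding Ext_def Bk_def n_def by auto
      have a3: "i \<in> blk k T w" using i unfolding Ext_def Bk_def B_def by auto
      have "w \<in> cnt k T c" unfolding cnt_def using wW a1 a2 a3 by blast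
      then show ?thesis using lhs BkE In0 t0 ext1 by simp
    qed
  next
    case False
    show ?thesis
    proof (cases "card Os = 0")
      case True
      then have "card Bk = 0" using c1 by simp
      moreover have "trm k T w c \<ge> 0" by (rule trm_nonneg) (use nw nwc cardB in simp)
      ultimately show ?thesis using lhs by simp
    next
      case Oc: False
      have "card Bk \<le> min (card Os) (card Z + 1)" using c1 c2 ext1 BkE by simp
      moreover have "real (min (card Os) (card Z + 1)) \<le> trm k T w c"
      proof -
        have "card Os \<ge> 1" "card Z \<ge> 1" using Oc False by auto
        from ent_ineq[OF this] show ?thesis unfolding trm_def nwz nw nwc cardB
          by (simp add: add.commute)
      qed
      ultimately have "real (card Bk) \<le> trm k T w c" by linarith
      then show ?thesis using lhs by simp
    qed
  qed
qed


lemma cnt_bound: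
  assumes fin: "finite T"
  shows "2 * card (cnt k T c) \<le> card (lamk k ` T) + 1"
proof -
  define n where "n = card T"
  define W where "W = lamk k ` T"
  define E where "E = {i. Suc i < n \<and> brk T c i \<and> cx k T i \<in> cnt k T c \<and> cx k T (Suc i) \<noteq> cx k T i}"
  have finW: "finite W" using fin W_def by simp
  have cW: "cnt k T c \<subseteq> W" unfolding cnt_def W_def by auto
  have finE: "finite E" by (rule finite_subset[of _ "{..<n}"]) (auto simp: E_def)
  have inj: "inj_on (\<lambda>i. cx k T (Suc i)) E"
  proof (rule inj_onI, rule ccontr)
    fix i j assume ij: "i \<in> E" "j \<in> E" "cx k T (Suc i) = cx k T (Suc j)" "i \<noteq> j"
    have key: False if a: "i' \<in> E" "j' \<in> E" "cx k T (Suc i') = cx k T (Suc j')" "i' < j'" for i' j'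
    proof -
      have "cx k T j' = cx k T (Suc i')"
        by (rule contig'[OF fin]) (use a in \<open>auto simp: E_def n_def\<close>)
      then show False using a unfolding E_def by auto
    qed
    show False using ij key by (metis linorder_neqE_nat)
  qed
  have img: "(\<lambda>i. cx k T (Suc i)) ` E \<subseteq> W - cnt k T c"
  proof
    fix x assume "x \<in> (\<lambda>i. cx k T (Suc i)) ` E"
    then obtain i where i: "i \<in> E" "x = cx k T (Suc i)" by auto
    have si: "Suc i < card T" "brk T c i" using i unfolding E_def n_def by auto
    then have nb: "\<not> bb T c (Suc i)" unfolding brk_def by auto
    have "x \<in> W" using cx_in[OF fin si(1)] i W_def by simp
    moreover have "Suc i \<in> blk k T x" using si i unfolding blk_def by simp
    ultimately show "x \<in> W - cnt k T c" using nb unfolding cnt_def by auto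
  qed
  have cE: "card E \<le> card W - card (cnt k T c)"
  proof -
    have "card E = card ((\<lambda>i. cx k T (Suc i)) ` E)" using inj by (simp add: card_image)
    also have "\<dots> \<le> card (W - cnt k T c)" using img finW by (simp add: card_mono)
    also have "\<dots> = card W - card (cnt k T c)" using cW finW by (simp add: card_Diff_subset finite_subset)
    finally show ?thesis .
  qed
  have sub: "cnt k T c \<subseteq> insert (cx k T (n - 1)) ((\<lambda>i. cx k T i) ` E)"
  proof
    fix w assume w: "w \<in> cnt k T c"
    then obtain i where i: "i \<in> blk k T w" "brk T c i" "Suc i = card T \<or> cx k T (Suc i) \<noteq> w"
      unfolding cnt_def by blast
    have iw: "cx k T i = w" "i < n" using i(1) unfolding blk_def n_def by auto
    show "w \<in> insert (cx k T (n - 1)) ((\<lambda>i. cx k T i) ` E)"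
    proof (cases "Suc i = n")
      case True then show ?thesis using iw by auto
    next
      case False
      then have "i \<in> E" using i iw w unfolding E_def n_def by auto
      then show ?thesis using iw by auto
    qed
  qed
  have "card (cnt k T c) \<le> card (insert (cx k T (n - 1)) ((\<lambda>i. cx k T i) ` E))"
    using sub finE by (simp add: card_mono)
  also have "\<dots> \<le> Suc (card ((\<lambda>i. cx k T i) ` E))" by (simp add: card_insert_le_m1)
  also have "\<dots> \<le> Suc (card E)" using finE by (simp add: card_image_le)
  finally have "card (cnt k T c) \<le> Suc (card E)" .
  moreover have "card (cnt k T c) \<le> card W" using cW finW by (simp add: card_mono)
  ultimately have "2 * card (cnt k T c) \<le> card W + 1" using cE by linarith
  then show ?thesis by (simp add: W_def)
qed

fun ctxs :: "'a set \<Rightarrow> nat \<Rightarrow> 'a option list set" where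
  "ctxs S 0 = {[]}"
| "ctxs S (Suc k) = insert (replicate (Suc k) None) ((\<lambda>(w,c). w @ [Some c]) ` (ctxs S k \<times> S))"

lemma lamk_Nil: "lamk k [] = replicate k None"
  by (simp add: lamk_eq)

lemma lamk_ctxs: "set u \<subseteq> S \<Longrightarrow> lamk k u \<in> ctxs S k"
proof (induction k arbitrary: u)
  case 0 then show ?case by simp
next
  case (Suc k)
  show ?case
  proof (cases "u = []")
    case True then show ?thesis by (simp add: lamk_Nil lam_def par_def replicate_append_same)
  next
    case False
    have "set (butlast u) \<subseteq> S" using Suc.prems by (meson in_set_butlastD subset_iff)
    then have "lamk k (butlast u) \<in> ctxs S k" by (rule Suc.IH)
    moreover have "last u \<in> S" using False Suc.prems by auto
    ultimately show ?thesis using False by (auto simp: lam_def par_def)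
  qed
qed

lemma ctxs_card:
  assumes "finite S" "card S \<ge> 2"
  shows "finite (ctxs S k) \<and> card (ctxs S k) + 1 \<le> 2 * card S ^ k"
proof (induction k)
  case 0 then show ?case by simp
next
  case (Suc k)
  let ?s = "card S"
  have f: "finite (ctxs S (Suc k))" using Suc assms by simp
  have "card (ctxs S (Suc k)) \<le> Suc (card ((\<lambda>(w,c). w @ [Some c]) ` (ctxs S k \<times> S)))"
    by (simp add: card_insert_le_m1)
  also have "\<dots> \<le> Suc (card (ctxs S k \<times> S))"
    using card_image_le[of "ctxs S k \<times> S" "\<lambda>(w,c). w @ [Some c]"] Suc assms by simp
  also have "\<dots> = Suc (card (ctxs S k) * ?s)" by (simp add: card_cartesian_product)
  finally have 1: "card (ctxs S (Suc k)) \<le> Suc (card (ctxs S k) * ?s)" .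
  have "(card (ctxs S k) + 1) * ?s \<le> 2 * ?s ^ k * ?s" using Suc mult_le_mono1 by presburger
  then have "card (ctxs S k) * ?s + ?s \<le> 2 * ?s ^ Suc k" by (simp add: algebra_simps)
  then show ?case using 1 f assms by linarith
qed


lemma nwc_le: "finite T \<Longrightarrow> n_wc k T w c \<le> n_w k T w"
  unfolding n_wc_def n_w_def by (rule card_mono) auto

lemma Hk_eq:
  assumes "finite T" "T \<noteq> {}"
  shows "real (card T) * Hk Sig k T = (\<Sum>w\<in>lamk k ` T. \<Sum>c\<in>Sig. trm k T w c)"
proof -
  have n0: "real (card T) \<noteq> 0" using assms by simp
  show ?thesis
    unfolding Hk_def Let_def sum_distrib_left
  proof (intro sum.cong refl)
    fix w c
    show "real (card T) * (real (n_wc k T w c) / real (card T) * log 2 (real (n_w k T w) / real (n_wc k T w c)) +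
          real (n_w k T w - n_wc k T w c) / real (card T) * log 2 (real (n_w k T w) / real (n_w k T w - n_wc k T w c)))
          = trm k T w c"
      unfolding trm_def using n0 by (simp add: distrib_left)
  qed
qed

lemma Hk_nonneg:
  assumes "finite T" "T \<noteq> {}"
  shows "real (card T) * Hk Sig k T \<ge> 0"
  unfolding Hk_eq[OF assms] by (intro sum_nonneg trm_nonneg nwc_le assms(1))

lemma main_gen:
  assumes fin: "finite T" and ne: "T \<noteq> {}"
  shows "real (xbwt_runs Sig T) \<le> real (card T) * Hk Sig k T + real (\<Sum>c\<in>Sig. card (cnt k T c))"
proof -
  let ?W = "lamk k ` T"
  have per: "real (card {i. brk T c i}) \<le> (\<Sum>w\<in>?W. trm k T w c) + real (card (cnt k T c))" for c
  proof -
    have "real (card {i. brk T c i}) = (\<Sum>w\<in>?W. real (card {i \<in> blk k T w. brk T c i}))"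
      using brk_split[OF fin, of c k] by simp
    also have "\<dots> \<le> (\<Sum>w\<in>?W. trm k T w c + (if w \<in> cnt k T c then 1 else 0))"
      by (intro sum_mono block_bound[OF fin])
    also have "\<dots> = (\<Sum>w\<in>?W. trm k T w c) + (\<Sum>w\<in>?W. (if w \<in> cnt k T c then 1 else 0))"
      by (simp add: sum.distrib)
    also have "(\<Sum>w\<in>?W. (if w \<in> cnt k T c then 1 else 0)) = real (card (?W \<inter> cnt k T c))"
      using fin by (simp add: sum.If_cases)
    also have "?W \<inter> cnt k T c = cnt k T c" unfolding cnt_def by auto
    finally show ?thesis .
  qed
  have "real (xbwt_runs Sig T) = (\<Sum>c\<in>Sig. real (card {i. brk T c i}))"
    unfolding runs_eq by simp
  also have "\<dots> \<le> (\<Sum>c\<in>Sig. (\<Sum>w\<in>?W. trm k T w c) + real (card (cnt k T c)))"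
    by (intro sum_mono per)
  also have "\<dots> = (\<Sum>w\<in>?W. \<Sum>c\<in>Sig. trm k T w c) + real (\<Sum>c\<in>Sig. card (cnt k T c))"
    by (simp add: sum.distrib sum.swap[of _ Sig])
  also have "\<dots> = real (card T) * Hk Sig k T + real (\<Sum>c\<in>Sig. card (cnt k T c))"
    using Hk_eq[OF fin ne] by simp
  finally show ?thesis .
qed


lemma rep_less: "j < m \<Longrightarrow> (replicate j (a::'a::linorder)) < replicate m a"
proof (induction j arbitrary: m)
  case 0 then show ?case by (cases m) auto
next
  case (Suc j) then show ?case by (cases m) auto
qed

lemma trie_take: "is_trie Sig T \<Longrightarrow> u \<in> T \<Longrightarrow> take j u \<in> T"
proof (induction u arbitrary: j rule: rev_induct)
  case Nil then show ?case by simp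
next
  case (snoc x xs)
  have "xs \<in> T" using snoc.prems unfolding is_trie_def by blast
  then show ?case using snoc by (cases "j \<le> length xs") auto
qed

lemma unary_runs:
  assumes tr: "is_trie {a} T"
  shows "xbwt_runs {a} T \<le> 1"
proof -
  have fin: "finite T" and nil: "[] \<in> T" and sig: "\<forall>s\<in>T. set s \<subseteq> {a}" using tr unfolding is_trie_def by auto
  define n where "n = card T"
  define us where "us = colex_nodes T"
  have L: "length us = n" and D: "distinct us" and S: "set us = T" and So: "sorted (map rev us)"
    using colex_facts[OF fin] unfolding us_def n_def by auto
  have rep0: "replicate (length u) a = u" if "u \<in> T" for u
    using sig that by (intro replicate_length_same) blast
  have rep: "u = replicate j a" if "u \<in> T" "length u = j" for u j
    using rep0[OF that(1)] that(2) by simp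
  define m where "m = Max (length ` T)"
  have lm: "length u \<le> m" if "u \<in> T" for u using fin that unfolding m_def by simp
  have "m \<in> length ` T" unfolding m_def using fin nil by (intro Max_in) auto
  then obtain v where v: "v \<in> T" "length v = m" by auto
  have vr: "v = replicate m a" using rep[OF v] .
  have leaf: "length u = m" if "u \<in> T" "a \<notin> out T u" for u
  proof (rule ccontr)
    assume "length u \<noteq> m"
    then have lt: "length u < m" using lm that by force
    have "take (Suc (length u)) v \<in> T" by (rule trie_take[OF tr v(1)])
    moreover have "take (Suc (length u)) v = replicate (Suc (length u)) a"
      using lt by (simp add: vr min_def)
    moreover have "u @ [a] = replicate (length u) a @ [a]" using rep[OF that(1) refl] by simp
    then have "u @ [a] = replicate (Suc (length u)) a" by (simp add: replicate_append_same)
    ultimately show False using that(2) unfolding out_def by simp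
  qed
  have n1: "n \<ge> 1" using fin nil unfolding n_def by (cases "card T") auto
  have un: "us ! (n - 1) \<in> T" using nth_mem[of "n - 1" us] L n1 S by simp
  have last: "length (us ! (n - 1)) = m"
  proof (rule ccontr)
    assume ne: "length (us ! (n - 1)) \<noteq> m"
    have "v \<in> set us" using v S by simp
    then obtain p where p: "p < n" "us ! p = v" using L by (auto simp: in_set_conv_nth)
    have "p \<noteq> n - 1" using p ne v by auto
    then have "p \<le> n - 1" using p by simp
    then have "map rev us ! p \<le> map rev us ! (n - 1)" using So L n1 by (intro sorted_nth_mono) auto
    then have le: "rev (us ! p) \<le> rev (us ! (n - 1))" using L p n1 by simp
    define j where "j = length (us ! (n - 1))"
    have "j < m" using lm[OF un] ne j_def by simp
    then have "replicate j a < replicate m a" by (rule rep_less)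
    moreover have "rev (us ! (n - 1)) = replicate j a" using rep[OF un j_def[symmetric]] by simp
    moreover have "rev (us ! p) = replicate m a" using p vr by simp
    ultimately show False using le by simp
  qed
  have "{i. brk T a i} \<subseteq> {n - 2}"
  proof
    fix i assume "i \<in> {i. brk T a i}"
    then have b: "i < n" "a \<in> out T (us ! i)" "i = n - 1 \<or> a \<notin> out T (us ! Suc i)"
      unfolding brk_def bb_def n_def us_def by auto
    have "(us ! i) @ [a] \<in> T" using b(2) unfolding out_def by simp
    then have "length (us ! i) < m" using lm by fastforce
    then have "i \<noteq> n - 1" using last by auto
    then have ai: "a \<notin> out T (us ! Suc i)" and si: "Suc i < n" using b by auto
    have usi: "us ! Suc i \<in> T" using nth_mem[of "Suc i" us] si S L by simp
    have "length (us ! Suc i) = m" using leaf[OF usi ai] .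
    then have "us ! Suc i = replicate m a" using rep[OF usi] by simp
    moreover have "us ! (n - 1) = replicate m a" using rep[OF un last] .
    ultimately have "us ! Suc i = us ! (n - 1)" by simp
    then have "Suc i = n - 1" using D L si n1 by (simp add: nth_eq_iff_index_eq)
    then show "i \<in> {n - 2}" by simp
  qed
  then have "card {i. brk T a i} \<le> card {n - 2}" by (intro card_mono) auto
  then have "card {i. brk T a i} \<le> 1" by simp
  then show ?thesis unfolding runs_eq by simp
qed

theorem corollary6:
  fixes Sig :: "('a::linorder) set" and T :: "'a list set" and k :: nat
  assumes "finite Sig"
    and "is_trie Sig T"
  shows "real (xbwt_runs Sig T)
           \<le> real (card T) * Hk Sig k T + real (card Sig) ^ (k + 1)"
proof -
  have fin: "finite T" and nil: "[] \<in> T" and sig: "\<forall>s\<in>T. set s \<subseteq> Sig"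
    using assms(2) unfolding is_trie_def by auto
  have ne: "T \<noteq> {}" using nil by auto
  consider "card Sig = 0" | "card Sig = 1" | "card Sig \<ge> 2" by linarith
  then show ?thesis
  proof cases
    case 1
    then have "Sig = {}" using assms(1) by simp
    have "xbwt_runs Sig T = 0" unfolding runs_eq using \<open>Sig = {}\<close> by simp
    then show ?thesis using Hk_nonneg[OF fin ne, of Sig k] 1 by simp
  next
    case 2
    obtain a where a: "Sig = {a}" using card_1_singletonE[OF 2] by blast
    have "real (xbwt_runs Sig T) \<le> 1" using unary_runs[of a T] assms(2) a by simp
    moreover have "real (card T) * Hk Sig k T \<ge> 0" by (rule Hk_nonneg[OF fin ne])
    ultimately show ?thesis using 2 by simp
  next
    case 3
    let ?s = "card Sig"
    let ?X = "\<Sum>c\<in>Sig. card (cnt k T c)"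
    have sub: "lamk k ` T \<subseteq> ctxs Sig k" using sig by (auto intro: lamk_ctxs)
    have cc: "finite (ctxs Sig k) \<and> card (ctxs Sig k) + 1 \<le> 2 * ?s ^ k"
      by (rule ctxs_card[OF assms(1) 3])
    have "card (lamk k ` T) \<le> card (ctxs Sig k)" using cc sub by (intro card_mono) auto
    then have K: "card (lamk k ` T) + 1 \<le> 2 * ?s ^ k" using cc by linarith
    have "2 * ?X = (\<Sum>c\<in>Sig. 2 * card (cnt k T c))"
      by (simp add: sum_distrib_left)
    also have "\<dots> \<le> (\<Sum>c\<in>Sig. card (lamk k ` T) + 1)"
      by (intro sum_mono cnt_bound[OF fin])
    also have "\<dots> = ?s * (card (lamk k ` T) + 1)" by simp
    also have "\<dots> \<le> ?s * (2 * ?s ^ k)" using K by (intro mult_le_mono2)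
    also have "\<dots> = 2 * ?s ^ (k + 1)" by simp
    finally have "2 * ?X \<le> 2 * ?s ^ (k + 1)" .
    then have "?X \<le> ?s ^ (k + 1)" by linarith
    then have "real ?X \<le> real (?s ^ (k + 1))"
      by (simp only: of_nat_le_iff)
    then have "real ?X \<le> real ?s ^ (k + 1)"
      by simp
    then show ?thesis using main_gen[OF fin ne, of Sig k] by linarith
  qed
qed

end
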